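(* We have $\alpha_0(z)=e^z-(z+1)$. For every $k\ge1$ there are polynomials $p_m^{(k)}(z)\in\mathbb Q[z]$, $1\le m\le k$, such that \[ \alpha_k(z)=\frac{(k+1)^k}{(k+1)!}e^{(k+1)z}+e^z\sum_{m=1}^k(-1)^m p_m^{(k)}(z)\,e^{(k-m)z}, \] and each $p_m^{(k)}$ has degree exactly $2m$ and positive leading coefficient.
   Context: For $n\ge3$ and $k\ge0$, $a_{k,n}=\operatorname{rk}H^{2k}(\overline{\mathcal M}_{0,n},\mathbb Q)$ is the coefficient of $t^k$ in $P_n(t)$, where $P_3(t)=1$ and, for $n>3$, $P_n(t)=P_{n-1}(t)(1+t)+t\sum_{i=3}^{n-2}\binom{n-2}{i-1}P_i(t)P_{n+1-i}(t)$ (so that $[\overline{\mathcal M}_{0,n}]=P_n(\mathbb L)$ in the Grothendieck ring of varieties). Define the generating function $\alpha_k(z)=\sum_{n\ge3}a_{k,n}\frac{z^{n-1}}{(n-1)!}$. *)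

theory Defs
  imports "HOL-Computational_Algebra.Computational_Algebra"
begin

text \<open>P n is the Poincare polynomial of the moduli space M_{0,n}-bar (only n >= 3 is meaningful;
  we set P n = 1 for n <= 3).\<close>
fun P :: "nat \<Rightarrow> int poly" where
  "P n = (if n \<le> 3 then 1
          else P (n - 1) * [:1, 1:]
             + [:0, 1:] * (\<Sum>i\<in>{3..n-2}.
                  smult (int ((n - 2) choose (i - 1))) (P i * P (n + 1 - i))))"

declare P.simps[simp del]

definition a :: "nat \<Rightarrow> nat \<Rightarrow> int" where
  "a k n = coeff (P n) k"

text \<open>alpha k = sum_{n>=3} a_{k,n} z^{n-1}/(n-1)!, as a formal power series over Q:
  the coefficient of z^j is a_{k,j+1}/j! when j+1 >= 3, and 0 otherwise.\<close>
definition alpha :: "nat \<Rightarrow> rat fps" where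
  "alpha k = Abs_fps (\<lambda>j. if 3 \<le> j + 1 then of_int (a k (j + 1)) / fact j else 0)"

end

theory Submission
  imports Defs
begin


lemma pascal_alt:
  fixes f :: "nat \<Rightarrow> rat"
  shows "(\<Sum>m\<le>Suc N. (-1)^m * of_nat (Suc N choose m) * f m)
       = (\<Sum>m\<le>N. (-1)^m * of_nat (N choose m) * (f m - f (Suc m)))"
proof -
  have "(\<Sum>m\<le>Suc N. (-1)^m * of_nat (Suc N choose m) * f m)
      = f 0 + (\<Sum>m\<le>N. (-1)^(Suc m) * of_nat (Suc N choose Suc m) * f (Suc m))"
    by (subst sum.atMost_Suc_shift) simp
  also have "\<dots> = f 0 - (\<Sum>m\<le>N. (-1)^m * of_nat (N choose m) * f (Suc m))
                  - (\<Sum>m\<le>N. (-1)^m * of_nat (N choose Suc m) * f (Suc m))"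
    by (simp add: sum_subtractf[symmetric] sum.distrib[symmetric] algebra_simps)
  also have "(\<Sum>m\<le>N. (-1)^m * of_nat (N choose Suc m) * f (Suc m)) =
             (\<Sum>m<N. (-1)^m * of_nat (N choose Suc m) * f (Suc m))"
    by (simp add: lessThan_Suc_atMost[symmetric])
  also have "(\<Sum>m\<le>N. (-1)^m * of_nat (N choose m) * f m) =
       f 0 + (\<Sum>m<N. (-1)^(Suc m) * of_nat (N choose Suc m) * f (Suc m))"
    apply (cases N) apply simp
    apply (simp only: sum.atMost_Suc_shift lessThan_Suc_atMost)
    by (simp add: lessThan_Suc_atMost[symmetric])
  hence "(\<Sum>m\<le>N. (-1)^m * of_nat (N choose m) * (f m - f (Suc m))) =
       f 0 + (\<Sum>m<N. (-1)^(Suc m) * of_nat (N choose Suc m) * f (Suc m))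
        - (\<Sum>m\<le>N. (-1)^m * of_nat (N choose m) * f (Suc m))"
    by (simp add: algebra_simps sum_subtractf)
  ultimately show ?thesis by (simp add: sum_negf)
qed



lemma degree_less_coeff0:
  fixes r :: "'a::zero poly"
  assumes "degree r \<le> d" "coeff r d = 0" "d > 0"
  shows "degree r < d"
proof (cases "r = 0")
  case True then show ?thesis using assms by simp
next
  case False
  then have "coeff r (degree r) \<noteq> 0" by simp
  then have "degree r \<noteq> d" using assms(2) by auto
  then show ?thesis using assms(1) by simp
qed

lemma shift_diff_degree:
  fixes p :: "rat poly"
  assumes "degree p > 0"
  shows "degree (p - pcompose p [:1,1:]) < degree p"
proof -
  have d: "degree (pcompose p [:1,1:]) = degree p" by (simp add: degree_pcompose)
  have l: "lead_coeff (pcompose p [:1,1:]) = lead_coeff p"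
    by (simp add: lead_coeff_comp)
  show ?thesis
    apply (rule degree_less_coeff0)
    using d l assms by (auto intro: degree_diff_le)
qed

lemma fin_diff:
  fixes p :: "rat poly"
  shows "degree p < N \<Longrightarrow> (\<Sum>m\<le>N. (-1)^m * of_nat (N choose m) * poly p (of_nat m)) = 0"
proof (induction N arbitrary: p)
  case 0 then show ?case by simp
next
  case (Suc N)
  define q where "q = p - pcompose p [:1,1:]"
  have qv: "poly q (of_nat m) = poly p (of_nat m) - poly p (of_nat (Suc m))" for m
    by (simp add: q_def poly_pcompose algebra_simps)
  have "(\<Sum>m\<le>Suc N. (-1)^m * of_nat (Suc N choose m) * poly p (of_nat m))
      = (\<Sum>m\<le>N. (-1)^m * of_nat (N choose m) * poly q (of_nat m))"
    unfolding pascal_alt qv ..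
  also have "\<dots> = 0"
  proof (cases "q = 0")
    case True then show ?thesis by simp
  next
    case False
    have "degree p > 0"
    proof (rule ccontr)
      assume "\<not> degree p > 0"
      then obtain c where "p = [:c:]" by (metis degree_eq_zeroE gr0I)
      then have "q = 0" unfolding q_def by simp
      with False show False by simp
    qed
    hence "degree q < N" using shift_diff_degree[of p] Suc.prems unfolding q_def by simp
    then show ?thesis by (rule Suc.IH)
  qed
  finally show ?case .
qed



definition LP :: "nat \<Rightarrow> rat \<Rightarrow> rat poly" where
  "LP N s = (\<Sum>m\<in>{1..N}. smult (of_nat ((N choose m) * m^(m-1))) ([:s + of_nat (N-m), 1:]^(N-m)))"

definition RP :: "nat \<Rightarrow> rat \<Rightarrow> rat poly" where
  "RP N s = smult (of_nat N) ([:s + of_nat N, 1:]^(N-1))"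

lemma pderiv_sum': "pderiv (sum f A) = sum (\<lambda>x. pderiv (f x)) A"
  by (induction A rule: infinite_finite_induct) (simp_all add: pderiv_add)

lemma smult_sum_right: "smult c (sum f A) = sum (\<lambda>x. smult c (f x)) A"
  by (induction A rule: infinite_finite_induct) (simp_all add: smult_add_right)

lemma pderiv_lin_pow: "pderiv ([:c, 1:]^n) = smult (of_nat n) ([:c,1:]^(n-1))"
  by (simp add: pderiv_power pderiv_pCons)

lemma pderiv_LP:
  assumes "N = Suc n"
  shows "pderiv (LP N s) = smult (of_nat N) (LP n (s+1))"
proof -
  have "pderiv (LP N s) = (\<Sum>m\<in>{1..N}. smult (of_nat ((N choose m) * m^(m-1) * (N-m))) ([:s + of_nat (N-m), 1:]^(N-m-1)))"
    unfolding LP_def by (simp add: pderiv_sum' pderiv_smult pderiv_lin_pow)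
  also have "\<dots> = (\<Sum>m\<in>{1..n}. smult (of_nat ((N choose m) * m^(m-1) * (N-m))) ([:s + of_nat (N-m), 1:]^(N-m-1)))"
    using assms by (simp add: atLeastAtMostSuc_conv)
  also have "\<dots> = (\<Sum>m\<in>{1..n}. smult (of_nat N) (smult (of_nat ((n choose m) * m^(m-1))) ([:(s+1) + of_nat (n-m), 1:]^(n-m))))"
  proof (rule sum.cong[OF refl])
    fix m assume m: "m \<in> {1..n}"
    have c: "(N choose m) * m^(m-1) * (N-m) = N * ((n choose m) * m^(m-1))"
    proof -
      have b: "(N - m) * (N choose m) = N * (n choose m)"
        using binomial_absorb_comp[of N m] assms by simp
      have "(N choose m) * m^(m-1) * (N-m) = ((N - m) * (N choose m)) * m^(m-1)" by (simp add: ac_simps)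
      also have "\<dots> = N * ((n choose m) * m^(m-1))" unfolding b by (simp add: ac_simps)
      finally show ?thesis .
    qed
    have e: "s + of_nat (N-m) = (s+1) + of_nat (n-m)" using m assms by (simp add: of_nat_diff)
    have f: "N - m - 1 = n - m" using assms by simp
    show "smult (of_nat ((N choose m) * m^(m-1) * (N-m))) ([:s + of_nat (N-m), 1:]^(N-m-1)) =
          smult (of_nat N) (smult (of_nat ((n choose m) * m^(m-1))) ([:(s+1) + of_nat (n-m), 1:]^(n-m)))"
      unfolding c e f by (simp only: of_nat_mult smult_smult)
  qed
  also have "\<dots> = smult (of_nat N) (LP n (s+1))"
    unfolding LP_def by (simp only: smult_sum_right)
  finally show ?thesis .
qed

lemma pderiv_RP:
  assumes "N = Suc n" "n \<ge> 1"
  shows "pderiv (RP N s) = smult (of_nat N) (RP n (s+1))"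
  using assms unfolding RP_def
  by (simp add: pderiv_smult pderiv_lin_pow algebra_simps)

lemma LP_root:
  assumes "N \<ge> 2"
  shows "poly (LP N s) (- (s + of_nat N)) = 0"
proof -
  have "poly (LP N s) (- (s + of_nat N)) =
     (\<Sum>m\<in>{1..N}. of_nat (N choose m) * (of_nat m)^(m-1) * (- of_nat m)^(N-m))"
    unfolding LP_def poly_sum
    by (intro sum.cong) (auto simp: of_nat_diff)
  also have "\<dots> = (\<Sum>m\<in>{1..N}. (-1)^N * ((-1)^m * of_nat (N choose m) * poly ([:0,1:]^(N-1)) (of_nat m)))"
  proof (rule sum.cong[OF refl])
    fix m assume m: "m \<in> {1..N}"
    have "(- (of_nat m :: rat))^(N-m) = (-1)^(N-m) * of_nat m ^(N-m)" by (simp add: power_minus')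
    moreover have "(of_nat m :: rat)^(m-1) * of_nat m ^(N-m) = of_nat m ^ (N-1)"
      using m by (simp add: power_add[symmetric])
    moreover have "(-1::rat)^(N-m) = (-1)^N * (-1)^m"
    proof -
      have "(-1::rat)^N = (-1)^(N-m) * (-1)^m" using m by (simp add: power_add[symmetric])
      then show ?thesis by (simp add: algebra_simps)
    qed
    ultimately show "of_nat (N choose m) * (of_nat m)^(m-1) * (- of_nat m)^(N-m) =
      ((-1)^N * ((-1)^m * of_nat (N choose m) * poly ([:0,1:]^(N-1)) (of_nat m)) :: rat)"
      by (simp add: algebra_simps)
  qed
  also have "\<dots> = (-1)^N * (\<Sum>m\<in>{1..N}. (-1)^m * of_nat (N choose m) * poly ([:0,1:]^(N-1)) (of_nat m :: rat))"
    by (simp add: sum_distrib_left)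
  also have "(\<Sum>m\<in>{1..N}. (-1)^m * of_nat (N choose m) * poly ([:0,1:]^(N-1)) (of_nat m :: rat))
      = (\<Sum>m\<le>N. (-1)^m * of_nat (N choose m) * poly ([:0,1:]^(N-1)) (of_nat m :: rat))"
  proof -
    have "{..N} = insert 0 {1..N}" by auto
    then show ?thesis using assms by simp
  qed
  also have "\<dots> = 0"
    by (rule fin_diff) (use assms in \<open>simp add: degree_power_eq\<close>)
  finally show ?thesis by simp
qed

lemma RP_root:
  assumes "N \<ge> 2"
  shows "poly (RP N s) (- (s + of_nat N)) = 0"
  using assms unfolding RP_def by simp

lemma LP_RP: "N \<ge> 1 \<Longrightarrow> LP N s = RP N s"
proof (induction N arbitrary: s rule: nat_induct_at_least)
  case base
  then show ?case by (simp add: LP_def RP_def)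
next
  case (Suc n)
  have "pderiv (LP (Suc n) s - RP (Suc n) s) = 0"
    using pderiv_LP[of "Suc n" n s] pderiv_RP[of "Suc n" n s] Suc by (simp add: pderiv_diff)
  then obtain h where h: "LP (Suc n) s - RP (Suc n) s = [:h:]" using pderiv_iszero by blast
  have "poly (LP (Suc n) s - RP (Suc n) s) (- (s + of_nat (Suc n))) = 0"
    using LP_root[of "Suc n" s] RP_root[of "Suc n" s] Suc by simp
  then have "h = 0" using h by simp
  then show ?case using h by simp
qed

lemma abel_identity:
  assumes "N \<ge> 1"
  shows "(\<Sum>m\<in>{1..N}. of_nat ((N choose m) * m^(m-1) * (N-m)^(N-m)) :: rat) = of_nat N ^ N"
proof -
  have "poly (LP N 0) 0 = poly (RP N 0) 0" using LP_RP[OF assms] by simp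
  moreover have "poly (LP N 0) 0 = (\<Sum>m\<in>{1..N}. of_nat ((N choose m) * m^(m-1) * (N-m)^(N-m)))"
    unfolding LP_def poly_sum by simp
  moreover have "poly (RP N 0) 0 = of_nat N ^ N"
    using assms unfolding RP_def by (simp add: power_Suc[symmetric])
  ultimately show ?thesis by simp
qed



definition cc :: "nat \<Rightarrow> rat" where
  "cc i = of_nat ((i+1)^i) / fact (i+1)"

lemma cc_pos: "cc i > 0" unfolding cc_def by simp

lemma cc_rec:
  assumes "k \<ge> 1"
  shows "of_nat k * cc k = (\<Sum>i<k. of_nat (i+1) * cc i * cc (k-1-i))"
proof -
  define N where "N = k + 1"
  have ab: "(\<Sum>m\<in>{1..N}. of_nat ((N choose m) * m^(m-1) * (N-m)^(N-m)) :: rat) = of_nat N ^ N"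
    using abel_identity[of N] N_def by simp
  have split: "{1..N} = insert N {1..k}" using N_def by auto
  have s1: "(\<Sum>m\<in>{1..k}. of_nat ((N choose m) * m^(m-1) * (N-m)^(N-m)) :: rat) = of_nat N ^ N - of_nat N ^ (N-1)"
    using ab unfolding split by (simp add: N_def)
  have trm: "of_nat ((N choose m) * m^(m-1) * (N-m)^(N-m)) / fact N = of_nat (N-m) * cc (N-m-1) * cc (m-1)"
    if m: "m \<in> {1..k}" for m
  proof -
    have mN: "m \<le> N" using m N_def by simp
    have e1: "(N-m)^(N-m) = (N-m) * (N-m)^(N-m-1)" using m N_def
      by (metis Suc_diff_Suc Suc_eq_plus1 atLeastAtMost_iff diff_Suc_1 le_imp_less_Suc power_Suc)
    have c1: "cc (m-1) = of_nat (m^(m-1)) / fact m" using m unfolding cc_def by simp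
    have nm: "N-m-1+1 = N-m" using m N_def by (simp add: Suc_diff_le)
    have c2: "cc (N-m-1) = of_nat ((N-m)^(N-m-1)) / fact (N-m)"
      by (simp only: cc_def nm)
    have bf: "(of_nat (N choose m) :: rat) = fact N / (fact m * fact (N-m))" by (rule binomial_fact[OF mN])
    show ?thesis unfolding c1 c2 of_nat_mult e1 bf by (simp add: field_simps)
  qed
  have "(\<Sum>m\<in>{1..k}. of_nat ((N choose m) * m^(m-1) * (N-m)^(N-m)) / fact N) =
        (\<Sum>m\<in>{1..k}. of_nat (N-m) * cc (N-m-1) * cc (m-1) :: rat)"
    using trm by (rule sum.cong[OF refl])
  also have "\<dots> = (\<Sum>i<k. of_nat (i+1) * cc i * cc (k-1-i))"
    by (rule sum.reindex_bij_witness[where i="\<lambda>i. k - i" and j="\<lambda>m. k - m"])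
       (auto simp: N_def)
  finally have "(\<Sum>i<k. of_nat (i+1) * cc i * cc (k-1-i)) = (of_nat N ^ N - of_nat N ^ (N-1)) / fact N"
    using s1 by (simp add: sum_divide_distrib[symmetric])
  also have "\<dots> = of_nat k * cc k"
  proof -
    have "(of_nat N ^ N :: rat) = of_nat N * of_nat N ^ (N-1)" using N_def by simp
    then show ?thesis unfolding cc_def N_def by (simp add: field_simps)
  qed
  finally show ?thesis by simp
qed



lemma P_unfold: "n > 3 \<Longrightarrow> P n = P (n - 1) * [:1, 1:]
             + [:0, 1:] * (\<Sum>i\<in>{3..n-2}.
                  smult (int ((n - 2) choose (i - 1))) (P i * P (n + 1 - i)))"
  by (subst P.simps) simp

lemma P_small: "n \<le> 3 \<Longrightarrow> P n = 1"
  by (subst P.simps) simp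

lemma coeff_P0: "coeff (P n) 0 = 1"
proof (induction n rule: less_induct)
  case (less n)
  show ?case
  proof (cases "n \<le> 3")
    case True then show ?thesis by (simp add: P_small)
  next
    case False
    then show ?thesis using less[of "n-1"]
      by (simp add: P_unfold mult_pCons_right mult_pCons_left)
  qed
qed

lemma a0: "a 0 n = 1" unfolding a_def by (rule coeff_P0)

lemma a3: "k \<ge> 1 \<Longrightarrow> a k 3 = 0" unfolding a_def by (simp add: P_small)

lemma a_rec:
  assumes "n \<ge> 4" "k \<ge> 1"
  shows "a k n = a k (n-1) + a (k-1) (n-1) +
     (\<Sum>i\<in>{3..n-2}. int ((n-2) choose (i-1)) * (\<Sum>u\<le>k-1. a u i * a (k-1-u) (n+1-i)))"
proof -
  obtain j where j: "k = Suc j" using assms by (cases k) auto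
  have "a k n = coeff (P n) k" by (simp add: a_def)
  also have "\<dots> = coeff (P (n-1) + pCons 0 (P (n-1))) k +
      coeff (pCons 0 (\<Sum>i\<in>{3..n-2}. smult (int ((n - 2) choose (i - 1))) (P i * P (n + 1 - i)))) k"
    using assms by (simp add: P_unfold mult_pCons_right mult_pCons_left)
  also have "\<dots> = a k (n-1) + a (k-1) (n-1) +
     (\<Sum>i\<in>{3..n-2}. int ((n-2) choose (i-1)) * (\<Sum>u\<le>k-1. a u i * a (k-1-u) (n+1-i)))"
    by (simp add: j a_def coeff_sum coeff_mult)
  finally show ?thesis .
qed



definition AA :: "nat \<Rightarrow> nat \<Rightarrow> rat" where
  "AA k j = (if 2 \<le> j then of_int (a k (j+1)) else 0)"

lemma alpha_nth: "alpha k $ j = AA k j / fact j"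
  unfolding alpha_def AA_def by auto

lemma AA_rec:
  assumes k: "k \<ge> 1"
  shows "AA k (Suc N) = AA k N + AA (k-1) N +
     (\<Sum>u<k. \<Sum>m\<le>N. of_nat (N choose m) * AA u (Suc m) * AA (k-1-u) (N-m))"
proof (cases "N \<ge> 2")
  case False
  then have "N = 0 \<or> N = 1" by auto
  then show ?thesis
  proof
    assume "N = 0" then show ?thesis by (simp add: AA_def)
  next
    assume N1: "N = 1"
    have "(\<Sum>m\<le>N. of_nat (N choose m) * AA u (Suc m) * AA (k-1-u) (N-m)) = 0" for u
      unfolding N1 by (simp add: AA_def)
    then show ?thesis using N1 a3[OF k] by (simp add: AA_def numeral_eq_Suc)
  qed
next
  case True
  define S where "S = (\<Sum>u<k. \<Sum>m\<le>N. of_nat (N choose m) * AA u (Suc m) * AA (k-1-u) (N-m))"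
  have S1: "S = (\<Sum>u<k. \<Sum>m\<in>{1..N-2}. of_nat (N choose m) * (of_int (a u (m+2)) * of_int (a (k-1-u) (N-m+1))))"
    unfolding S_def
  proof (rule sum.cong[OF refl])
    fix u
    show "(\<Sum>m\<le>N. of_nat (N choose m) * AA u (Suc m) * AA (k-1-u) (N-m)) =
       (\<Sum>m\<in>{1..N-2}. of_nat (N choose m) * (of_int (a u (m+2)) * of_int (a (k-1-u) (N-m+1))))"
    proof -
      have "(\<Sum>m\<le>N. of_nat (N choose m) * AA u (Suc m) * AA (k-1-u) (N-m)) =
            (\<Sum>m\<in>{1..N-2}. of_nat (N choose m) * AA u (Suc m) * AA (k-1-u) (N-m))"
        by (rule sum.mono_neutral_right) (auto simp: AA_def)
      also have "\<dots> = (\<Sum>m\<in>{1..N-2}. of_nat (N choose m) * (of_int (a u (m+2)) * of_int (a (k-1-u) (N-m+1))))"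
        by (rule sum.cong[OF refl]) (auto simp: AA_def)
      finally show ?thesis .
    qed
  qed
  define R where "R = (\<Sum>i\<in>{3..N}. of_nat (N choose (i-1)) * (\<Sum>u\<le>k-1. of_int (a u i) * of_int (a (k-1-u) (N+3-i)) :: rat))"
  have R1: "R = (\<Sum>u<k. \<Sum>i\<in>{3..N}. of_nat (N choose (i-1)) * (of_int (a u i) * of_int (a (k-1-u) (N+3-i))))"
  proof -
    have "{..k-1} = {..<k}" using k by auto
    then show ?thesis unfolding R_def by (simp add: sum_distrib_left sum.swap[of _ "{3..N}"])
  qed
  also have "\<dots> = (\<Sum>u<k. \<Sum>i\<in>{3..N}. of_nat (N choose (i-1)) * (of_int (a (k-1-u) i) * of_int (a u (N+3-i))))"
  proof -
    have "(\<Sum>u<k. \<Sum>i\<in>{3..N}. of_nat (N choose (i-1)) * (of_int (a (k - Suc u) i) * of_int (a (k - 1 - (k - Suc u)) (N+3-i))) :: rat)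
        = (\<Sum>u<k. \<Sum>i\<in>{3..N}. of_nat (N choose (i-1)) * (of_int (a u i) * of_int (a (k-1-u) (N+3-i))))"
      by (rule sum.nat_diff_reindex)
    moreover have "\<And>u. u < k \<Longrightarrow> k - 1 - (k - Suc u) = u" by auto
    ultimately show ?thesis by (metis (no_types, lifting) diff_Suc_eq_diff_pred lessThan_iff sum.cong)
  qed
  also have "\<dots> = S"
    unfolding S1
  proof (rule sum.cong[OF refl])
    fix u
    show "(\<Sum>i\<in>{3..N}. of_nat (N choose (i-1)) * (of_int (a (k-1-u) i) * of_int (a u (N+3-i)))) =
       (\<Sum>m\<in>{1..N-2}. of_nat (N choose m) * (of_int (a u (m+2)) * of_int (a (k-1-u) (N-m+1))) :: rat)"
    proof (rule sum.reindex_bij_witness[where i="\<lambda>m. N + 1 - m" and j="\<lambda>i. N + 1 - i"])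
      fix i assume i: "i \<in> {3..N}"
      define m where "m = N + 1 - i"
      have mi: "i = N + 1 - m" "m \<ge> 1" "m \<le> N - 2" using i True by (auto simp: m_def)
      have "N choose (i - 1) = N choose m"
        using mi binomial_symmetric[of m N] True by auto
      moreover have "N + 3 - i = m + 2" "i = N - m + 1" using mi i True by auto
      ultimately show "(of_nat (N choose (N + 1 - i)) * (of_int (a u (N + 1 - i + 2)) * of_int (a (k-1-u) (N-(N + 1 - i)+1))) :: rat) =
         of_nat (N choose (i-1)) * (of_int (a (k-1-u) i) * of_int (a u (N+3-i)))"
        unfolding m_def[symmetric] by (simp add: mult.commute)
    qed (use True in auto)
  qed
  finally have RS: "R = S" .
  have rec: "a k (N+2) = a k (N+1) + a (k-1) (N+1) +
     (\<Sum>i\<in>{3..N}. int (N choose (i-1)) * (\<Sum>u\<le>k-1. a u i * a (k-1-u) (N+3-i)))"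
    using a_rec[of "N+2" k] k True by (simp add: numeral_eq_Suc)
  have "AA k (Suc N) = of_int (a k (N+2))" using True by (simp add: AA_def)
  also have "\<dots> = of_int (a k (N+1)) + of_int (a (k-1) (N+1)) + R"
    unfolding rec R_def by simp
  also have "\<dots> = AA k N + AA (k-1) N + S" using True RS by (simp add: AA_def)
  finally show ?thesis unfolding S_def .
qed



lemma deriv_alpha_nth: "fps_deriv (alpha k) $ i = AA k (Suc i) / fact i"
proof -
  have "fact (Suc i) = (of_nat (Suc i) :: rat) * fact i" by simp
  then show ?thesis by (simp add: alpha_nth del: of_nat_Suc)
qed

lemma prod_alpha_nth:
  "(fps_deriv (alpha u) * alpha v) $ N = (\<Sum>m\<le>N. of_nat (N choose m) * AA u (Suc m) * AA v (N-m)) / fact N"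
proof -
  have "(fps_deriv (alpha u) * alpha v) $ N = (\<Sum>m\<le>N. AA u (Suc m) / fact m * (AA v (N-m) / fact (N-m)))"
    by (simp add: fps_mult_nth deriv_alpha_nth alpha_nth atLeast0AtMost)
  also have "\<dots> = (\<Sum>m\<le>N. of_nat (N choose m) * AA u (Suc m) * AA v (N-m) / fact N)"
  proof (rule sum.cong[OF refl])
    fix m assume "m \<in> {..N}"
    then have mN: "m \<le> N" by simp
    show "AA u (Suc m) / fact m * (AA v (N-m) / fact (N-m)) = of_nat (N choose m) * AA u (Suc m) * AA v (N-m) / fact N"
      unfolding binomial_fact[OF mN] by (simp add: field_simps)
  qed
  also have "\<dots> = (\<Sum>m\<le>N. of_nat (N choose m) * AA u (Suc m) * AA v (N-m)) / fact N"
    by (simp add: sum_divide_distrib)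
  finally show ?thesis .
qed

lemma alpha_ode:
  assumes "k \<ge> 1"
  shows "fps_deriv (alpha k) - alpha k = alpha (k-1) + (\<Sum>u<k. fps_deriv (alpha u) * alpha (k-1-u))"
proof (rule fps_ext)
  fix N
  have "(fps_deriv (alpha k) - alpha k) $ N = (AA k (Suc N) - AA k N) / fact N"
    by (simp add: deriv_alpha_nth alpha_nth diff_divide_distrib)
  also have "\<dots> = (AA (k-1) N + (\<Sum>u<k. \<Sum>m\<le>N. of_nat (N choose m) * AA u (Suc m) * AA (k-1-u) (N-m))) / fact N"
    using AA_rec[OF assms, of N] by simp
  also have "\<dots> = (alpha (k-1) + (\<Sum>u<k. fps_deriv (alpha u) * alpha (k-1-u))) $ N"
    by (simp add: fps_sum_nth prod_alpha_nth alpha_nth add_divide_distrib sum_divide_distrib)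
  finally show "(fps_deriv (alpha k) - alpha k) $ N = (alpha (k-1) + (\<Sum>u<k. fps_deriv (alpha u) * alpha (k-1-u))) $ N" .
qed

lemma alpha_0th: "alpha k $ 0 = 0" by (simp add: alpha_nth AA_def)

lemma alpha0: "alpha 0 = fps_exp 1 - (fps_X + 1)"
proof (rule fps_ext)
  fix j show "alpha 0 $ j = (fps_exp 1 - (fps_X + 1)) $ j"
    by (cases j; cases "j - 1") (auto simp: alpha_nth AA_def a0 fps_X_nth algebra_simps)
qed



definition Phi :: "rat poly poly \<Rightarrow> rat fps" where
  "Phi Q = (\<Sum>i\<le>degree Q. fps_of_poly (coeff Q i) * fps_exp (of_nat i))"

lemma Phi_bound:
  assumes "degree Q \<le> n"
  shows "Phi Q = (\<Sum>i\<le>n. fps_of_poly (coeff Q i) * fps_exp (of_nat i))"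
  unfolding Phi_def
  by (rule sum.mono_neutral_left) (use assms in \<open>auto simp: coeff_eq_0\<close>)

lemma Phi_poly: "Phi Q = poly (map_poly fps_of_poly Q) (fps_exp 1)"
proof -
  have d: "degree (map_poly fps_of_poly Q) = degree Q"
    by (rule degree_map_poly) (simp add: fps_of_poly_eq_iff[of _ 0, simplified])
  show ?thesis
    unfolding Phi_def poly_altdef d
    by (intro sum.cong refl) (simp add: coeff_map_poly fps_exp_power_mult)
qed

lemma map_fps_mult: "map_poly fps_of_poly (Q * R) = map_poly fps_of_poly Q * map_poly fps_of_poly (R :: rat poly poly)"
  by (rule poly_eqI) (simp add: coeff_map_poly coeff_mult fps_of_poly_sum fps_of_poly_mult)

lemma map_fps_add: "map_poly fps_of_poly (Q + R) = map_poly fps_of_poly Q + map_poly fps_of_poly (R :: rat poly poly)"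
  by (rule poly_eqI) (simp add: coeff_map_poly fps_of_poly_add)

lemma Phi_mult: "Phi (Q * R) = Phi Q * Phi R"
  unfolding Phi_poly map_fps_mult by simp

lemma Phi_add: "Phi (Q + R) = Phi Q + Phi R"
  unfolding Phi_poly map_fps_add by simp

lemma Phi_0[simp]: "Phi 0 = 0" by (simp add: Phi_def)

lemma Phi_sum: "Phi (sum f A) = (\<Sum>x\<in>A. Phi (f x))"
  by (induction A rule: infinite_finite_induct) (simp_all add: Phi_add)

lemma Phi_diff: "Phi (Q - R) = Phi Q - Phi R"
proof -
  have "Phi Q = Phi (Q - R) + Phi R" using Phi_add[of "Q - R" R] by simp
  then show ?thesis by simp
qed

definition DD :: "rat poly poly \<Rightarrow> rat poly poly" where
  "DD Q = map_poly pderiv Q + pCons 0 (pderiv Q)"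

lemma coeff_DD: "coeff (DD Q) i = pderiv (coeff Q i) + smult (of_nat i) (coeff Q i)"
proof (cases i)
  case 0 then show ?thesis by (simp add: DD_def coeff_map_poly)
next
  case (Suc j)
  then show ?thesis
    by (simp add: DD_def coeff_map_poly coeff_pderiv of_nat_poly del: of_nat_Suc)
qed

lemma degree_DD: "degree (DD Q) \<le> degree Q"
proof -
  have "coeff (DD Q) i = 0" if "i > degree Q" for i
    using that by (simp add: coeff_DD coeff_eq_0)
  then show ?thesis by (intro degree_le) auto
qed

lemma Phi_deriv: "fps_deriv (Phi Q) = Phi (DD Q)"
proof -
  have "fps_deriv (Phi Q) = (\<Sum>i\<le>degree Q. fps_deriv (fps_of_poly (coeff Q i) * fps_exp (of_nat i)))"
    unfolding Phi_def by (simp add: fps_deriv_sum)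
  also have "\<dots> = (\<Sum>i\<le>degree Q. fps_of_poly (coeff (DD Q) i) * fps_exp (of_nat i))"
    by (intro sum.cong refl)
       (simp add: coeff_DD fps_of_poly_add fps_of_poly_pderiv fps_of_poly_smult algebra_simps)
  also have "\<dots> = Phi (DD Q)"
    by (rule Phi_bound[symmetric]) (rule degree_DD)
  finally show ?thesis .
qed

lemma Phi_0th: "Phi Q $ 0 = (\<Sum>i\<le>degree Q. coeff (coeff Q i) 0)"
  unfolding Phi_def by (simp add: fps_sum_nth fps_mult_nth)

lemma Phi_monom1: "Phi (monom c 1) = fps_of_poly c * fps_exp 1"
  by (rule trans[OF Phi_bound[of _ 1]]) (auto simp: degree_monom_le)

lemma ode_unique:
  fixes f g :: "rat fps"
  assumes "fps_deriv f - f = fps_deriv g - g" "f $ 0 = g $ 0"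
  shows "f = g"
proof -
  define h where "h = f - g"
  have h1: "fps_deriv h = h" using assms(1) unfolding h_def by (simp add: algebra_simps)
  have "h $ n = 0" for n
  proof (induction n)
    case 0 then show ?case using assms(2) by (simp add: h_def)
  next
    case (Suc n)
    have "fps_deriv h $ n = h $ n" using h1 by simp
    then have "of_nat (Suc n) * h $ Suc n = 0" using Suc by simp
    then show ?case by (simp del: of_nat_Suc)
  qed
  then have "h = 0" by (simp add: fps_eq_iff)
  then show ?thesis by (simp add: h_def)
qed



definition solC :: "rat \<Rightarrow> rat poly \<Rightarrow> rat poly" where
  "solC c r = (\<Sum>i\<le>degree r. smult ((-1)^i / c^(i+1)) ((pderiv^^i) r))"

lemma higher_pderiv_vanish: "(pderiv^^(Suc (degree r))) r = 0"
  by (rule poly_eqI) (simp add: coeff_higher_pderiv coeff_eq_0 del: funpow.simps)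

lemma solC_eq:
  assumes "c \<noteq> 0"
  shows "pderiv (solC c r) + smult c (solC c r) = r"
proof -
  define t where "t i = smult ((-1)^i / c^i) ((pderiv^^i) r)" for i
  have "pderiv (solC c r) + smult c (solC c r) = (\<Sum>i<Suc (degree r). t i - t (Suc i))"
    unfolding solC_def pderiv_sum' smult_sum_right sum.distrib[symmetric] lessThan_Suc_atMost
  proof (intro sum.cong refl)
    fix i
    show "pderiv (smult ((-1)^i / c^(i+1)) ((pderiv^^i) r)) + smult c (smult ((-1)^i / c^(i+1)) ((pderiv^^i) r))
          = t i - t (Suc i)"
      using assms unfolding t_def
      by (simp add: pderiv_smult smult_diff_left[symmetric] power_Suc smult_add_left[symmetric] field_simps
          del: smult_add_left)
  qed
  also have "\<dots> = t 0 - t (Suc (degree r))" by (rule sum_lessThan_telescope')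
  also have "\<dots> = r" unfolding t_def by (simp add: higher_pderiv_vanish del: funpow.simps)
  finally show ?thesis .
qed

lemma solC_0[simp]: "solC c 0 = 0" by (simp add: solC_def)

lemma solC_const: "solC c [:x:] = [:x / c:]"
  by (simp add: solC_def)

lemma coeff_higher_pderiv_top:
  assumes "degree r \<le> d" "i \<ge> 1"
  shows "coeff ((pderiv^^i) r) d = 0"
  using assms by (simp add: coeff_higher_pderiv coeff_eq_0)

lemma degree_higher_pderiv_le: "degree ((pderiv^^i) r) \<le> degree r"
  by (rule degree_le) (auto simp: coeff_higher_pderiv coeff_eq_0)

lemma solC_degree: "degree (solC c r) \<le> degree r"
  by (rule degree_le) (auto simp: solC_def coeff_sum coeff_higher_pderiv coeff_eq_0)

lemma solC_top:
  assumes "degree r \<le> d"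
  shows "coeff (solC c r) d = coeff r d / c"
proof -
  have "coeff (solC c r) d = (\<Sum>i\<le>degree r. (-1)^i / c^(i+1) * coeff ((pderiv^^i) r) d)"
    by (simp add: solC_def coeff_sum)
  also have "\<dots> = (\<Sum>i\<in>{0}. (-1)^i / c^(i+1) * coeff ((pderiv^^i) r) d)"
    by (rule sum.mono_neutral_right) (auto simp: coeff_higher_pderiv_top[OF assms])
  finally show ?thesis by simp
qed

definition intg :: "rat poly \<Rightarrow> rat poly" where
  "intg r = (\<Sum>i\<le>degree r. monom (coeff r i / of_nat (Suc i)) (Suc i))"

lemma pderiv_intg: "pderiv (intg r) = r"
proof -
  have "pderiv (intg r) = (\<Sum>i\<le>degree r. monom (coeff r i) i)"
    unfolding intg_def pderiv_sum' by (intro sum.cong refl) (simp add: pderiv_monom del: of_nat_Suc)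
  then show ?thesis by (simp add: poly_as_sum_of_monoms)
qed

lemma coeff_intg_Suc: "coeff (intg r) (Suc n) = coeff r n / of_nat (Suc n)"
proof (cases "n \<le> degree r")
  case True
  then show ?thesis unfolding intg_def coeff_sum by (simp add: sum.delta)
next
  case False
  then show ?thesis unfolding intg_def coeff_sum by (simp add: coeff_eq_0)
qed

lemma coeff_intg_0: "coeff (intg r) 0 = 0"
  unfolding intg_def coeff_sum by simp

lemma intg_0[simp]: "intg 0 = 0" by (simp add: intg_def)

lemma degree_intg: "degree (intg r) \<le> Suc (degree r)"
proof (rule degree_le, intro allI impI)
  fix i assume "Suc (degree r) < i"
  then obtain n where "i = Suc n" "n > degree r" by (cases i) auto
  then show "coeff (intg r) i = 0" by (simp add: coeff_intg_Suc coeff_eq_0)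
qed



definition cmpt :: "nat \<Rightarrow> rat poly \<Rightarrow> rat poly" where
  "cmpt j r = (if j = 1 then intg r else solC (of_nat j - 1) r)"

lemma cmpt_0[simp]: "cmpt j 0 = 0" by (simp add: cmpt_def)

lemma cmpt_eq: "pderiv (cmpt j r) + smult (of_nat j - 1) (cmpt j r) = r"
proof (cases "j = 1")
  case True then show ?thesis by (simp add: cmpt_def pderiv_intg)
next
  case False
  then have "(of_nat j - 1 :: rat) \<noteq> 0" by simp
  then show ?thesis using False by (simp add: cmpt_def solC_eq)
qed

definition Y0 :: "rat poly poly \<Rightarrow> rat poly poly" where
  "Y0 Rq = Poly (map (\<lambda>j. cmpt j (coeff Rq j)) [0..<degree Rq + 2])"

lemma coeff_Y0: "coeff (Y0 Rq) j = cmpt j (coeff Rq j)"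
proof (cases "j < degree Rq + 2")
  case True then show ?thesis by (simp add: Y0_def nth_default_def del: upt_Suc)
next
  case False then show ?thesis by (simp add: Y0_def nth_default_def coeff_eq_0)
qed

definition Ysol :: "rat poly poly \<Rightarrow> rat poly poly" where
  "Ysol Rq = Y0 Rq + monom [: - (Phi (Y0 Rq) $ 0) :] 1"

lemma coeff_Ysol: "coeff (Ysol Rq) j = cmpt j (coeff Rq j) + (if j = 1 then [: - (Phi (Y0 Rq) $ 0) :] else 0)"
  by (simp add: Ysol_def coeff_Y0)

lemma Ysol_ode: "fps_deriv (Phi (Ysol Rq)) - Phi (Ysol Rq) = Phi Rq"
proof -
  have "DD (Ysol Rq) - Ysol Rq = Rq"
  proof (rule poly_eqI)
    fix j
    define y where "y = cmpt j (coeff Rq j)"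
    define C where "C = - (Phi (Y0 Rq) $ 0)"
    have cY: "coeff (Ysol Rq) j = y + (if j = 1 then [:C:] else 0)"
      unfolding y_def C_def by (rule coeff_Ysol)
    have "coeff (DD (Ysol Rq) - Ysol Rq) j = pderiv y + smult (of_nat j - 1) y
       + (if j = 1 then pderiv [:C:] + smult (of_nat j - 1) [:C:] else 0)"
      unfolding coeff_diff coeff_DD cY
      by (auto simp: pderiv_add smult_add_right smult_diff_left algebra_simps)
    also have "\<dots> = coeff Rq j" unfolding y_def cmpt_eq by simp
    finally show "coeff (DD (Ysol Rq) - Ysol Rq) j = coeff Rq j" .
  qed
  then show ?thesis by (metis Phi_deriv Phi_diff)
qed

lemma Ysol_0th: "Phi (Ysol Rq) $ 0 = 0"
  unfolding Ysol_def Phi_add Phi_monom1 by simp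



definition Wp :: "nat \<Rightarrow> rat \<Rightarrow> rat poly \<Rightarrow> bool" where
  "Wp d s p \<longleftrightarrow> degree p \<le> d \<and> 0 \<le> s * coeff p d"

definition Gp :: "nat \<Rightarrow> rat \<Rightarrow> rat poly \<Rightarrow> bool" where
  "Gp d s p \<longleftrightarrow> degree p \<le> d \<and> 0 < s * coeff p d"

lemma Gp_Wp: "Gp d s p \<Longrightarrow> Wp d s p" by (simp add: Gp_def Wp_def)

lemma Gp_degree: "Gp d s p \<Longrightarrow> degree p = d"
  unfolding Gp_def by (metis le_antisym le_degree mult_zero_right order_less_irrefl)

lemma Gp_lead: "Gp d s p \<Longrightarrow> 0 < s * lead_coeff p"
  using Gp_degree by (fastforce simp: Gp_def)

lemma Wp_low: "degree p < d \<Longrightarrow> Wp d s p"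
  by (simp add: Wp_def coeff_eq_0)

lemma Wp_zero[simp]: "Wp d s 0" by (simp add: Wp_def)

lemma Wp_add: "Wp d s p \<Longrightarrow> Wp d s q \<Longrightarrow> Wp d s (p + q)"
  by (auto simp: Wp_def degree_add_le distrib_left)

lemma Gp_add: "Gp d s p \<Longrightarrow> Wp d s q \<Longrightarrow> Gp d s (p + q)"
  by (auto simp: Wp_def Gp_def degree_add_le distrib_left)

lemma Wp_sum: "finite A \<Longrightarrow> (\<And>x. x \<in> A \<Longrightarrow> Wp d s (f x)) \<Longrightarrow> Wp d s (sum f A)"
  by (induction A rule: finite_induct) (auto intro: Wp_add)

lemma Gp_sum:
  assumes "finite A" "\<And>x. x \<in> A \<Longrightarrow> Wp d s (f x)" "wit \<in> A" "Gp d s (f wit)"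
  shows "Gp d s (sum f A)"
proof -
  have "sum f A = f wit + sum f (A - {wit})" using assms by (simp add: sum.remove)
  moreover have "Wp d s (sum f (A - {wit}))" using assms by (intro Wp_sum) auto
  ultimately show ?thesis using Gp_add assms by simp
qed

lemma coeff_mult_bound:
  fixes p q :: "rat poly"
  assumes "degree p \<le> d1" "degree q \<le> d2"
  shows "coeff (p * q) (d1 + d2) = coeff p d1 * coeff q d2"
proof (cases "degree p = d1 \<and> degree q = d2")
  case True then show ?thesis using coeff_mult_degree_sum[of p q] by simp
next
  case False
  then have "degree p < d1 \<or> degree q < d2" using assms by auto
  then have "coeff p d1 * coeff q d2 = 0" by (auto simp: coeff_eq_0)
  moreover have "degree (p * q) < d1 + d2"
    using degree_mult_le[of p q] \<open>degree p < d1 \<or> degree q < d2\<close> assms by linarith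
  ultimately show ?thesis by (simp add: coeff_eq_0)
qed

lemma Wp_mult:
  assumes "Wp d1 s1 p" "Wp d2 s2 q"
  shows "Wp (d1 + d2) (s1 * s2) (p * q)"
proof -
  have b: "degree p \<le> d1" "degree q \<le> d2" using assms by (auto simp: Wp_def)
  have "degree (p * q) \<le> d1 + d2" using b degree_mult_le[of p q] by simp
  moreover have c: "coeff (p * q) (d1 + d2) = coeff p d1 * coeff q d2"
    using b by (rule coeff_mult_bound)
  have e: "s1 * s2 * coeff (p * q) (d1 + d2) = (s1 * coeff p d1) * (s2 * coeff q d2)"
    unfolding c by (simp add: algebra_simps)
  moreover have pos: "0 \<le> (s1 * coeff p d1) * (s2 * coeff q d2)"
    using mult_nonneg_nonneg[of "s1 * coeff p d1" "s2 * coeff q d2"] assms by (auto simp: Wp_def)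
  ultimately show ?thesis unfolding Wp_def by (simp only: e pos simp_thms)
qed

lemma Gp_mult:
  assumes "Gp d1 s1 p" "Gp d2 s2 q"
  shows "Gp (d1 + d2) (s1 * s2) (p * q)"
proof -
  have b: "degree p \<le> d1" "degree q \<le> d2" using assms by (auto simp: Gp_def)
  have "degree (p * q) \<le> d1 + d2" using b degree_mult_le[of p q] by simp
  moreover have c: "coeff (p * q) (d1 + d2) = coeff p d1 * coeff q d2"
    using b by (rule coeff_mult_bound)
  have e: "s1 * s2 * coeff (p * q) (d1 + d2) = (s1 * coeff p d1) * (s2 * coeff q d2)"
    unfolding c by (simp add: algebra_simps)
  moreover have pos: "0 < (s1 * coeff p d1) * (s2 * coeff q d2)"
    using mult_pos_pos[of "s1 * coeff p d1" "s2 * coeff q d2"] assms by (auto simp: Gp_def)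
  ultimately show ?thesis unfolding Gp_def by (simp only: e pos simp_thms)
qed

lemma Gp_smult: "c > 0 \<Longrightarrow> Gp d s p \<Longrightarrow> Gp d s (smult c p)"
proof -
  assume a1: "c > 0" "Gp d s p"
  have e: "s * coeff (smult c p) d = c * (s * coeff p d)" by (simp add: algebra_simps)
  have pos: "0 < c * (s * coeff p d)" using a1 mult_pos_pos[of c "s * coeff p d"] by (auto simp: Gp_def)
  have deg: "degree (smult c p) \<le> d" using a1 degree_smult_le[of c p] by (auto simp: Gp_def)
  show ?thesis unfolding Gp_def by (simp only: e pos deg simp_thms)
qed

lemma Wp_pderiv: "degree p \<le> d \<Longrightarrow> Wp d s (pderiv p)"
  unfolding Wp_def by (auto simp: coeff_pderiv coeff_eq_0 degree_pderiv)

lemma Gp_DDcomp: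
  assumes "Gp d s q" "j \<ge> 1"
  shows "Gp d s (pderiv q + smult (of_nat j) q)"
proof -
  have "Gp d s (smult (of_nat j) q)" using assms by (intro Gp_smult) auto
  moreover have "Wp d s (pderiv q)" using assms by (intro Wp_pderiv) (simp add: Gp_def)
  ultimately have "Gp d s (smult (of_nat j) q + pderiv q)" by (rule Gp_add)
  then show ?thesis by (simp add: add.commute)
qed

lemma Gp_solC: "c > 0 \<Longrightarrow> Gp d s r \<Longrightarrow> Gp d s (solC c r)"
proof -
  assume c: "c > 0" and g: "Gp d s r"
  then have dr: "degree r \<le> d" by (simp add: Gp_def)
  have "s * coeff (solC c r) d = (s * coeff r d) / c" using solC_top[OF dr, of c] by simp
  moreover have "(s * coeff r d) / c > 0" using c g by (simp add: Gp_def)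
  ultimately show ?thesis using solC_degree[of c r] dr by (simp add: Gp_def)
qed

lemma Gp_intg:
  assumes "Gp d s r"
  shows "Gp (Suc d) s (intg r + [:x:])"
proof -
  have "degree (intg r + [:x:]) \<le> Suc d"
    using degree_intg[of r] assms by (intro degree_add_le) (auto simp: Gp_def)
  moreover have "coeff (intg r + [:x:]) (Suc d) = coeff r d / of_nat (Suc d)"
    by (simp add: coeff_intg_Suc)
  ultimately show ?thesis using assms unfolding Gp_def
    by (simp add: zero_less_mult_iff zero_less_divide_iff del: of_nat_Suc)
qed



definition good :: "nat \<Rightarrow> rat poly poly \<Rightarrow> bool" where
  "good k Q \<longleftrightarrow> alpha k = Phi Q \<and> degree Q \<le> k + 1 \<and>
     coeff Q 0 = (if k = 0 then [:-1,-1:] else 0) \<and> coeff Q (k+1) = [:cc k:] \<and>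
     (\<forall>j\<in>{1..k}. Gp (2*(k+1-j)) ((-1)^(k+1-j)) (coeff Q j))"

lemma good_zero: "good u Q \<Longrightarrow> u + 1 < j \<Longrightarrow> coeff Q j = 0"
  unfolding good_def by (simp add: coeff_eq_0)

lemma good_G: "good u Q \<Longrightarrow> 1 \<le> j \<Longrightarrow> j \<le> u + 1 \<Longrightarrow> Gp (2*(u+1-j)) ((-1)^(u+1-j)) (coeff Q j)"
proof -
  assume g: "good u Q" and j: "1 \<le> j" "j \<le> u + 1"
  show ?thesis
  proof (cases "j = u + 1")
    case True
    then show ?thesis using g cc_pos[of u] by (simp add: good_def Gp_def)
  next
    case False
    then show ?thesis using g j by (simp add: good_def)
  qed
qed

lemma good_deg: "good u Q \<Longrightarrow> 1 \<le> j \<Longrightarrow> degree (coeff Q j) \<le> 2*(u+1-j)"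
proof -
  assume g: "good u Q" and j: "1 \<le> j"
  show ?thesis
  proof (cases "j \<le> u + 1")
    case True then show ?thesis using good_G[OF g j True] by (simp add: Gp_def)
  next
    case False then show ?thesis using good_zero[OF g] by simp
  qed
qed

lemma good_deg0: "good u Q \<Longrightarrow> degree (coeff Q 0) \<le> 1"
  unfolding good_def by auto

lemma good_zero0: "good u Q \<Longrightarrow> u \<ge> 1 \<Longrightarrow> coeff Q 0 = 0"
  unfolding good_def by auto

lemma degree_DDc: "degree (coeff (DD Q) i) \<le> degree (coeff Q i)"
proof -
  have "degree (pderiv (coeff Q i)) \<le> degree (coeff Q i)" by (simp add: degree_pderiv)
  then show ?thesis unfolding coeff_DD
    by (meson degree_add_le degree_smult_le order_trans)
qed

lemma coeff_DD_zero: "coeff Q i = 0 \<Longrightarrow> coeff (DD Q) i = 0"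
  by (simp add: coeff_DD)

lemma good_DDG: "good u Q \<Longrightarrow> 1 \<le> j \<Longrightarrow> j \<le> u + 1 \<Longrightarrow> Gp (2*(u+1-j)) ((-1)^(u+1-j)) (coeff (DD Q) j)"
  unfolding coeff_DD by (intro Gp_DDcomp good_G) auto

lemma good_DD_deg: "good u Q \<Longrightarrow> 1 \<le> j \<Longrightarrow> degree (coeff (DD Q) j) \<le> 2*(u+1-j)"
  using degree_DDc good_deg order_trans by blast

definition Q0 :: "rat poly poly" where "Q0 = [: [:-1,-1:], 1 :]"

lemma good_Q0: "good 0 Q0"
proof -
  have "Phi Q0 = fps_of_poly [:-1,-1:] + fps_exp 1"
    unfolding Phi_def Q0_def by simp
  also have "\<dots> = fps_exp 1 - (fps_X + 1)"
    by (auto simp: fps_eq_iff fps_X_nth coeff_pCons split: nat.split)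
  finally have "alpha 0 = Phi Q0" using alpha0 by simp
  then show ?thesis unfolding good_def Q0_def by (simp add: cc_def)
qed



lemma sum_const_poly: "(\<Sum>x\<in>A. [:f x:]) = [:sum f A:]"
  by (induction A rule: infinite_finite_induct) auto

context
  fixes k :: nat and Qf :: "nat \<Rightarrow> rat poly poly"
  assumes k: "k \<ge> 1" and IH: "\<And>u. u < k \<Longrightarrow> good u (Qf u)"
begin

definition Rq where "Rq = Qf (k-1) + (\<Sum>u<k. DD (Qf u) * Qf (k-1-u))"

definition T where "T u i j = coeff (DD (Qf u)) i * coeff (Qf (k-1-u)) (j-i)"

lemma coeff_Rq: "coeff Rq j = coeff (Qf (k-1)) j + (\<Sum>u<k. \<Sum>i\<le>j. T u i j)"
  unfolding Rq_def T_def by (simp add: coeff_sum coeff_mult)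

lemma Phi_Rq: "Phi Rq = alpha (k-1) + (\<Sum>u<k. fps_deriv (alpha u) * alpha (k-1-u))"
proof -
  have g: "alpha u = Phi (Qf u)" if "u < k" for u using IH[OF that] by (simp add: good_def)
  have "Phi Rq = Phi (Qf (k-1)) + (\<Sum>u<k. fps_deriv (Phi (Qf u)) * Phi (Qf (k-1-u)))"
    unfolding Rq_def Phi_add Phi_sum Phi_mult Phi_deriv ..
  also have "\<dots> = alpha (k-1) + (\<Sum>u<k. fps_deriv (alpha u) * alpha (k-1-u))"
    using g k by (intro arg_cong2[where f="(+)"] sum.cong) auto
  finally show ?thesis .
qed

lemma alpha_Y: "alpha k = Phi (Ysol Rq)"
  by (rule ode_unique) (simp_all add: alpha_ode[OF k] Phi_Rq Ysol_ode alpha_0th Ysol_0th)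

lemma T_G:
  assumes u: "u < k" and i: "1 \<le> i" "i \<le> u + 1" "1 \<le> j - i" "j - i \<le> k - u" "i \<le> j"
  shows "Gp (2*(k+1-j)) ((-1)^(k+1-j)) (T u i j)"
proof -
  have g1: "Gp (2*(u+1-i)) ((-1)^(u+1-i)) (coeff (DD (Qf u)) i)"
    using good_DDG[OF IH[OF u]] i by simp
  have g2: "Gp (2*(k-1-u+1-(j-i))) ((-1)^(k-1-u+1-(j-i))) (coeff (Qf (k-1-u)) (j-i))"
    using good_G[OF IH, of "k-1-u" "j-i"] u i by simp
  have e1: "2*(u+1-i) + 2*(k-1-u+1-(j-i)) = 2*(k+1-j)" using u i by simp
  have e2: "(-1::rat)^(u+1-i) * (-1)^(k-1-u+1-(j-i)) = (-1)^(k+1-j)"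
    unfolding power_add[symmetric] using u i by (simp add: algebra_simps)
  show ?thesis using Gp_mult[OF g1 g2] unfolding e1 e2 T_def .
qed

lemma T_W:
  assumes u: "u < k" and j: "2 \<le> j" "j \<le> k" and i: "i \<le> j"
  shows "Wp (2*(k+1-j)) ((-1)^(k+1-j)) (T u i j)"
proof -
  define v where "v = k - 1 - u"
  have gu: "good u (Qf u)" and gv: "good v (Qf v)" using IH u by (auto simp: v_def)
  consider "i = 0" | "i = j" | "1 \<le> i" "i < j" using i by linarith
  then show ?thesis
  proof cases
    case 1
    have "degree (coeff (DD (Qf u)) 0) \<le> 0"
      using good_deg0[OF gu] by (simp add: coeff_DD degree_pderiv)
    moreover have "degree (coeff (Qf v) j) \<le> 2*(k-j)"
      using good_deg[OF gv, of j] j u by (simp add: v_def)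
    ultimately have "degree (T u i j) < 2*(k+1-j)"
      unfolding T_def 1 v_def[symmetric] using degree_mult_le[of "coeff (DD (Qf u)) 0" "coeff (Qf v) j"] j by simp
    then show ?thesis by (rule Wp_low)
  next
    case 2
    show ?thesis
    proof (cases "j \<le> u + 1")
      case False
      then have "coeff (DD (Qf u)) j = 0" using good_zero[OF gu] coeff_DD_zero by simp
      then show ?thesis unfolding T_def 2 by simp
    next
      case True
      have "degree (coeff (DD (Qf u)) j) \<le> 2*(u+1-j)" using good_DD_deg[OF gu] j by simp
      moreover have "degree (coeff (Qf v) 0) \<le> 1" using good_deg0[OF gv] .
      ultimately have "degree (T u i j) < 2*(k+1-j)"
        unfolding T_def 2 v_def[symmetric]
        using degree_mult_le[of "coeff (DD (Qf u)) j" "coeff (Qf v) 0"] j u True by simp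
      then show ?thesis by (rule Wp_low)
    qed
  next
    case 3
    show ?thesis
    proof (cases "i \<le> u + 1 \<and> j - i \<le> k - u")
      case True
      then show ?thesis using T_G[OF u] 3 by (intro Gp_Wp) simp
    next
      case False
      then have "coeff (DD (Qf u)) i = 0 \<or> coeff (Qf v) (j - i) = 0"
        using good_zero[OF gu] good_zero[OF gv] coeff_DD_zero u by (auto simp: v_def)
      then show ?thesis unfolding T_def v_def[symmetric] by auto
    qed
  qed
qed

lemma Rq_mid:
  assumes j: "2 \<le> j" "j \<le> k"
  shows "Gp (2*(k+1-j)) ((-1)^(k+1-j)) (coeff Rq j)"
proof -
  have X: "Wp (2*(k+1-j)) ((-1)^(k+1-j)) (coeff (Qf (k-1)) j)"
  proof (rule Wp_low)
    have "degree (coeff (Qf (k-1)) j) \<le> 2*(k-1+1-j)" using good_deg[OF IH, of "k-1" j] k j by simp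
    then show "degree (coeff (Qf (k-1)) j) < 2*(k+1-j)" using j k by simp
  qed
  have inner: "Gp (2*(k+1-j)) ((-1)^(k+1-j)) (\<Sum>i\<le>j. T (k-1) i j)"
  proof (rule Gp_sum[where wit="j-1"])
    show "Wp (2*(k+1-j)) ((-1)^(k+1-j)) (T (k-1) i j)" if "i \<in> {..j}" for i
      using T_W[of "k-1" j i] that j k by simp
    show "Gp (2*(k+1-j)) ((-1)^(k+1-j)) (T (k-1) (j-1) j)"
      using T_G[of "k-1" "j-1" j] j k by simp
  qed (use j in auto)
  have "Gp (2*(k+1-j)) ((-1)^(k+1-j)) (\<Sum>u<k. \<Sum>i\<le>j. T u i j)"
  proof (rule Gp_sum[where wit="k-1"])
    show "Wp (2*(k+1-j)) ((-1)^(k+1-j)) (\<Sum>i\<le>j. T u i j)" if "u \<in> {..<k}" for u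
      using T_W[of u j] that j by (intro Wp_sum) auto
  qed (use k inner in auto)
  then have "Gp (2*(k+1-j)) ((-1)^(k+1-j)) ((\<Sum>u<k. \<Sum>i\<le>j. T u i j) + coeff (Qf (k-1)) j)"
    using X by (rule Gp_add)
  then show ?thesis unfolding coeff_Rq by (simp add: add.commute)
qed

lemma Rq_1: "Gp (2*k-1) ((-1)^k) (coeff Rq 1)"
proof -
  have X: "Wp (2*k-1) ((-1)^k) (coeff (Qf (k-1)) 1)"
  proof (rule Wp_low)
    have "degree (coeff (Qf (k-1)) 1) \<le> 2*(k-1+1-1)" using good_deg[OF IH, of "k-1" 1] k by simp
    then show "degree (coeff (Qf (k-1)) 1) < 2*k-1" using k by simp
  qed
  have W0: "Wp (2*k-1) ((-1)^k) (T u 0 1)" if u: "u < k" for u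
  proof (rule Wp_low)
    have "degree (coeff (DD (Qf u)) 0) \<le> 0"
      using good_deg0[OF IH[OF u]] by (simp add: coeff_DD degree_pderiv)
    moreover have "degree (coeff (Qf (k-1-u)) 1) \<le> 2*(k-1-u+1-1)"
      using good_deg[OF IH, of "k-1-u" 1] u by simp
    ultimately show "degree (T u 0 1) < 2*k-1"
      unfolding T_def using degree_mult_le[of "coeff (DD (Qf u)) 0" "coeff (Qf (k-1-u)) 1"] u k by simp
  qed
  have W1: "Wp (2*k-1) ((-1)^k) (T u 1 1)" if u: "u < k - 1" for u
  proof -
    have "coeff (Qf (k-1-u)) 0 = 0" using good_zero0[OF IH, of "k-1-u"] u by simp
    then show ?thesis by (simp add: T_def)
  qed
  have G1: "Gp (2*k-1) ((-1)^k) (T (k-1) 1 1)"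
  proof -
    have g1: "Gp (2*(k-1)) ((-1)^(k-1)) (coeff (DD (Qf (k-1))) 1)"
      using good_DDG[OF IH, of "k-1" 1] k by simp
    have q0: "coeff (Qf 0) 0 = [:-1,-1:]" using IH[of 0] k by (simp add: good_def)
    have g2: "Gp 1 (-1) (coeff (Qf 0) 0)" unfolding q0 by (simp add: Gp_def)
    have e1: "2*(k-1) + 1 = 2*k-1" using k by simp
    have e2: "(-1::rat)^(k-1) * (-1) = (-1)^k" using k by (cases k) auto
    show ?thesis using Gp_mult[OF g1 g2] unfolding e1 e2 T_def using k by simp
  qed
  have inner: "Gp (2*k-1) ((-1)^k) (\<Sum>i\<le>1. T (k-1) i 1)"
  proof -
    have "(\<Sum>i\<le>1. T (k-1) i 1) = T (k-1) 1 1 + T (k-1) 0 1" by simp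
    moreover have "Gp (2*k-1) ((-1)^k) (T (k-1) 1 1 + T (k-1) 0 1)"
      using G1 W0[of "k-1"] k by (intro Gp_add) auto
    ultimately show ?thesis by (simp add: add.commute)
  qed
  have "Gp (2*k-1) ((-1)^k) (\<Sum>u<k. \<Sum>i\<le>1. T u i 1)"
  proof (rule Gp_sum[where wit="k-1"])
    show "Wp (2*k-1) ((-1)^k) (\<Sum>i\<le>1. T u i 1)" if "u \<in> {..<k}" for u
    proof (cases "u = k - 1")
      case True then show ?thesis using inner Gp_Wp by simp
    next
      case False
      then have "u < k - 1" using that by auto
      then show ?thesis using W0[of u] W1[of u] that by (simp add: Wp_add)
    qed
  qed (use k inner in auto)
  then have "Gp (2*k-1) ((-1)^k) ((\<Sum>u<k. \<Sum>i\<le>1. T u i 1) + coeff (Qf (k-1)) 1)"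
    using X by (rule Gp_add)
  then show ?thesis unfolding coeff_Rq by (simp add: add.commute)
qed

lemma Rq_0: "coeff Rq 0 = 0"
proof (cases "k = 1")
  case True
  have q0: "coeff (Qf 0) 0 = [:-1,-1:]" using IH[of 0] True by (simp add: good_def)
  show ?thesis unfolding coeff_Rq T_def using True q0 by (simp add: coeff_DD pderiv_pCons)
next
  case False
  then have k2: "k \<ge> 2" using k by simp
  have X: "coeff (Qf (k-1)) 0 = 0" using good_zero0[OF IH, of "k-1"] k2 by simp
  have "T u 0 0 = 0" if u: "u < k" for u
  proof (cases "u \<ge> 1")
    case True
    then have "coeff (Qf u) 0 = 0" using good_zero0[OF IH[OF u]] by simp
    then show ?thesis by (simp add: T_def coeff_DD)
  next
    case False
    then have "coeff (Qf (k-1-u)) 0 = 0" using good_zero0[OF IH, of "k-1-u"] k2 by simp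
    then show ?thesis by (simp add: T_def)
  qed
  then show ?thesis unfolding coeff_Rq using X by simp
qed

lemma Rq_top: "coeff Rq (k+1) = [:of_nat k * cc k:]"
proof -
  have X: "coeff (Qf (k-1)) (k+1) = 0" using good_zero[OF IH, of "k-1" "k+1"] k by simp
  have Tv: "T u i (k+1) = (if i = u + 1 then [:of_nat (u+1) * cc u * cc (k-1-u):] else 0)"
    if u: "u < k" and i: "i \<le> k + 1" for u i
  proof (cases "i = u + 1")
    case True
    have c1: "coeff (Qf u) (u+1) = [:cc u:]" using IH[OF u] by (simp add: good_def)
    have c2: "coeff (Qf (k-1-u)) (k-1-u+1) = [:cc (k-1-u):]" using IH[of "k-1-u"] u by (simp add: good_def)
    have e: "k + 1 - i = k-1-u+1" using True u by simp
    show ?thesis unfolding T_def e coeff_DD c2 using True c1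
      by (simp add: of_nat_poly algebra_simps del: of_nat_Suc)
  next
    case False
    show ?thesis
    proof (cases "i > u + 1")
      case True
      then have "coeff (DD (Qf u)) i = 0" using good_zero[OF IH[OF u]] coeff_DD_zero by simp
      then show ?thesis using False by (simp add: T_def)
    next
      case False2: False
      then have "coeff (Qf (k-1-u)) (k+1-i) = 0" using good_zero[OF IH, of "k-1-u" "k+1-i"] u False by simp
      then show ?thesis using False by (simp add: T_def)
    qed
  qed
  have "(\<Sum>u<k. \<Sum>i\<le>k+1. T u i (k+1)) = (\<Sum>u<k. [:of_nat (u+1) * cc u * cc (k-1-u):])"
  proof (rule sum.cong[OF refl])
    fix u assume "u \<in> {..<k}"
    then have u: "u < k" by simp
    have "(\<Sum>i\<le>k+1. T u i (k+1)) = (\<Sum>i\<le>k+1. (if i = u + 1 then [:of_nat (u+1) * cc u * cc (k-1-u):] else 0))"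
      using Tv[OF u] by (intro sum.cong) auto
    also have "\<dots> = [:of_nat (u+1) * cc u * cc (k-1-u):]" using u by (simp add: sum.delta)
    finally show "(\<Sum>i\<le>k+1. T u i (k+1)) = [:of_nat (u+1) * cc u * cc (k-1-u):]" .
  qed
  also have "\<dots> = [:of_nat k * cc k:]" unfolding sum_const_poly cc_rec[OF k] ..
  finally show ?thesis unfolding coeff_Rq X by simp
qed

lemma Rq_high: "j > k + 1 \<Longrightarrow> coeff Rq j = 0"
proof -
  assume j: "j > k + 1"
  have X: "coeff (Qf (k-1)) j = 0" using good_zero[OF IH, of "k-1" j] k j by simp
  have "T u i j = 0" if u: "u < k" and i: "i \<le> j" for u i
  proof (cases "i > u + 1")
    case True
    then have "coeff (DD (Qf u)) i = 0" using good_zero[OF IH[OF u]] coeff_DD_zero by simp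
    then show ?thesis by (simp add: T_def)
  next
    case False
    then have "coeff (Qf (k-1-u)) (j-i) = 0" using good_zero[OF IH, of "k-1-u" "j-i"] u j by simp
    then show ?thesis by (simp add: T_def)
  qed
  then show ?thesis unfolding coeff_Rq X by simp
qed

lemma good_step: "good k (Ysol Rq)"
proof -
  define C where "C = - (Phi (Y0 Rq) $ 0)"
  have cY: "coeff (Ysol Rq) j = cmpt j (coeff Rq j) + (if j = 1 then [:C:] else 0)" for j
    unfolding C_def by (rule coeff_Ysol)
  have deg: "degree (Ysol Rq) \<le> k + 1"
    by (rule degree_le) (auto simp: cY Rq_high)
  have c0: "coeff (Ysol Rq) 0 = 0" unfolding cY Rq_0 by simp
  have ctop: "coeff (Ysol Rq) (k+1) = [:cc k:]"
    using k unfolding cY Rq_top by (simp add: cmpt_def solC_const)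
  have mid: "Gp (2*(k+1-j)) ((-1)^(k+1-j)) (coeff (Ysol Rq) j)" if j: "j \<in> {1..k}" for j
  proof (cases "j = 1")
    case True
    have "Gp (Suc (2*k-1)) ((-1)^k) (intg (coeff Rq 1) + [:C:])" by (rule Gp_intg[OF Rq_1])
    moreover have "Suc (2*k-1) = 2*(k+1-1)" using k by simp
    ultimately show ?thesis unfolding cY using True by (simp add: cmpt_def)
  next
    case False
    then have j2: "2 \<le> j" "j \<le> k" using j by auto
    have "(of_nat j - 1 :: rat) > 0" using j2 by simp
    then show ?thesis unfolding cY using False Gp_solC Rq_mid[OF j2] by (simp add: cmpt_def)
  qed
  show ?thesis unfolding good_def using alpha_Y deg c0 ctop mid k by simp
qed

end



lemma exists_good: "\<exists>Q. good k Q"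
proof (induction k rule: less_induct)
  case (less k)
  show ?case
  proof (cases "k = 0")
    case True then show ?thesis using good_Q0 by auto
  next
    case False
    have "\<forall>u. \<exists>Q. u < k \<longrightarrow> good u Q" using less by auto
    then obtain Qf where Qf: "\<forall>u. u < k \<longrightarrow> good u (Qf u)" by (metis choice)
    have "good k (Ysol (Rq k Qf))"
      by (rule good_step) (use False Qf in auto)
    then show ?thesis by blast
  qed
qed

lemma main_k:
  assumes k: "k \<ge> 1"
  shows "\<exists>p :: nat \<Rightarrow> rat poly.
       alpha k = fps_const (of_nat ((k + 1) ^ k) / fact (k + 1)) * fps_exp (of_nat (k + 1))
         + fps_exp 1 * (\<Sum>m = 1..k. (-1) ^ m * fps_of_poly (p m) * fps_exp (of_nat (k - m)))
       \<and> (\<forall>m\<in>{1..k}. degree (p m) = 2 * m \<and> lead_coeff (p m) > 0)"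
proof -
  obtain Q where g: "good k Q" using exists_good by blast
  define p where "p m = smult ((-1)^m) (coeff Q (k+1-m))" for m
  define f where "f i = fps_of_poly (coeff Q i) * fps_exp (of_nat i :: rat)" for i
  have G: "Gp (2*m) ((-1)^m) (coeff Q (k+1-m))" if m: "m \<in> {1..k}" for m
  proof -
    have all: "\<forall>j\<in>{1..k}. Gp (2*(k+1-j)) ((-1)^(k+1-j)) (coeff Q j)"
      using g unfolding good_def by blast
    have "k+1-m \<in> {1..k}" using m by auto
    with all have "Gp (2*(k+1-(k+1-m))) ((-1)^(k+1-(k+1-m))) (coeff Q (k+1-m))" by blast
    moreover have "k+1-(k+1-m) = m" using m by simp
    ultimately show ?thesis by simp
  qed
  have deg: "\<forall>m\<in>{1..k}. degree (p m) = 2 * m \<and> lead_coeff (p m) > 0"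
  proof
    fix m assume m: "m \<in> {1..k}"
    have "degree (p m) = 2 * m" using Gp_degree[OF G[OF m]] by (simp add: p_def)
    moreover have "lead_coeff (p m) > 0" using Gp_lead[OF G[OF m]] by (simp add: p_def)
    ultimately show "degree (p m) = 2 * m \<and> lead_coeff (p m) > 0" ..
  qed
  have "alpha k = (\<Sum>i\<le>k+1. f i)"
    using g Phi_bound[of Q "k+1"] by (simp add: good_def f_def)
  also have "\<dots> = f (k+1) + f 0 + (\<Sum>i\<in>{1..k}. f i)"
  proof -
    have "{..k} = insert 0 {1..k}" by auto
    then show ?thesis by (simp add: add.commute)
  qed
  also have "f 0 = 0" using g k by (simp add: f_def good_def)
  also have "f (k+1) = fps_const (of_nat ((k + 1) ^ k) / fact (k + 1)) * fps_exp (of_nat (k + 1))"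
    using g by (simp add: f_def good_def cc_def fps_of_poly_const)
  also have "(\<Sum>i\<in>{1..k}. f i) = (\<Sum>m\<in>{1..k}. f (k+1-m))"
    by (rule sum.reindex_bij_witness[where i="\<lambda>m. k+1-m" and j="\<lambda>i. k+1-i"]) auto
  also have "\<dots> = fps_exp 1 * (\<Sum>m = 1..k. (-1) ^ m * fps_of_poly (p m) * fps_exp (of_nat (k - m)))"
    unfolding sum_distrib_left
  proof (rule sum.cong[OF refl])
    fix m assume m: "m \<in> {1..k}"
    have e: "fps_exp (of_nat (k+1-m) :: rat) = fps_exp 1 * fps_exp (of_nat (k-m))"
      using m by (simp add: fps_exp_add_mult[symmetric] of_nat_diff)
    have s: "(-1::rat fps)^m * fps_of_poly (p m) = fps_of_poly (coeff Q (k+1-m))"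
      by (simp add: p_def fps_of_poly_smult fps_const_power[symmetric] fps_const_neg[symmetric]
          power_mult_distrib[symmetric] mult.assoc[symmetric])
    show "f (k+1-m) = fps_exp 1 * ((-1) ^ m * fps_of_poly (p m) * fps_exp (of_nat (k - m)))"
      unfolding f_def e s[symmetric] by (simp add: ac_simps)
  qed
  finally show ?thesis using deg by auto
qed

theorem theorem4p1:
  shows "alpha 0 = fps_exp 1 - (fps_X + 1) \<and>
    (\<forall>k\<ge>1. \<exists>p :: nat \<Rightarrow> rat poly.
       alpha k = fps_const (of_nat ((k + 1) ^ k) / fact (k + 1)) * fps_exp (of_nat (k + 1))
         + fps_exp 1 * (\<Sum>m = 1..k. (-1) ^ m * fps_of_poly (p m) * fps_exp (of_nat (k - m)))
       \<and> (\<forall>m\<in>{1..k}. degree (p m) = 2 * m \<and> lead_coeff (p m) > 0))"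
  using alpha0 main_k by blast


end
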